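(* Let $0<\gamma<0.1$ and consider the dataset in $\mathbb{R}^2$: $\mathbf{x}_1=(\gamma,\sqrt{1-\gamma^2})$, $\mathbf{x}_2=(\gamma,-\sqrt{1-\gamma^2}/2)$, $y_1=y_2=1$. Let $L(\mathbf{w})=\frac12\sum_{i=1}^2\ln(1+\exp(-y_i\mathbf{x}_i^\top\mathbf{w}))$ and run gradient descent $\mathbf{w}_t=\mathbf{w}_{t-1}-\eta\nabla L(\mathbf{w}_{t-1})$ with $\mathbf{w}_0=0$ and constant stepsize $\eta>0$. If the sequence $(L(\mathbf{w}_t))_{t\ge0}$ is non-increasing, then $L(\mathbf{w}_t)\ge c_0/t$ for all $t\ge1$, where $c_0>0$ depends only on $\gamma$ (not on $t$ or $\eta$). *)

theory Defs
  imports "HOL-Analysis.Analysis"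
begin

definition data_x :: "real \<Rightarrow> nat \<Rightarrow> real^2" where
  "data_x \<gamma> i = (if i = 1 then vector [\<gamma>, sqrt (1 - \<gamma>^2)]
                   else vector [\<gamma>, - sqrt (1 - \<gamma>^2) / 2])"

definition data_y :: "nat \<Rightarrow> real" where
  "data_y i = 1"

definition logloss :: "real \<Rightarrow> real^2 \<Rightarrow> real" where
  "logloss \<gamma> w = (1/2) * (\<Sum>i\<in>{1,2::nat}. ln (1 + exp (- data_y i * (data_x \<gamma> i \<bullet> w))))"

definition logloss_grad :: "real \<Rightarrow> real^2 \<Rightarrow> real^2" where
  "logloss_grad \<gamma> w = (1/2) *\<^sub>R (\<Sum>i\<in>{1,2::nat}.
      (- data_y i / (1 + exp (data_y i * (data_x \<gamma> i \<bullet> w)))) *\<^sub>R data_x \<gamma> i)"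

primrec gd :: "real \<Rightarrow> real \<Rightarrow> nat \<Rightarrow> real^2" where
  "gd \<gamma> \<eta> 0 = 0"
| "gd \<gamma> \<eta> (Suc t) = gd \<gamma> \<eta> t - \<eta> *\<^sub>R logloss_grad \<gamma> (gd \<gamma> \<eta> t)"

end

theory Submission
  imports Defs
begin

definition ell :: "real \<Rightarrow> real" where "ell z = ln (1 + exp (- z))"

lemma ell_pos: "ell z > 0"
  unfolding ell_def by (simp add: ln_gt_zero)

lemma ell_ge_neg: "ell z \<ge> - z"
proof -
  have p: "0 < 1 + exp (-z)" by (simp add: add_pos_pos)
  have "ln (exp (-z)) \<le> ln (1 + exp (-z))" using p by (subst ln_le_cancel_iff) auto
  then show ?thesis unfolding ell_def by simp
qed

lemma ell_ge_g: "1 / (1 + exp z) \<le> ell z"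
proof -
  define u where "u = exp (-z)"
  have u: "u > 0" unfolding u_def by simp
  have eq: "1 / (1 + exp z) = u / (1 + u)"
    unfolding u_def by (simp add: exp_minus field_simps)
  have "ln (1 / (1 + u)) \<le> 1 / (1 + u) - 1" using u by (intro ln_le_minus_one) auto
  then have "u / (1 + u) \<le> ln (1 + u)" using u by (simp add: ln_div field_simps)
  then show ?thesis unfolding ell_def eq u_def by simp
qed

lemma ell_mono: "z \<le> z' \<Longrightarrow> ell z' \<le> ell z"
  unfolding ell_def by (subst ln_le_cancel_iff) (auto simp: add_pos_pos)

lemma ell_mult: "exp (- \<bar>z' - z\<bar>) * ell z \<le> ell z'"
proof (cases "z \<le> z'")
  case True
  define l where "l = exp (-(z' - z))"
  define u where "u = exp (-z)"
  have l: "0 \<le> l" "l \<le> 1" unfolding l_def using True by auto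
  have u: "u > 0" unfolding u_def by simp
  have "exp ((1 - l) *\<^sub>R 0 + l *\<^sub>R ln (1 + u)) \<le> (1 - l) * exp 0 + l * exp (ln (1 + u))"
    by (rule convex_onD[OF exp_convex]) (use l in auto)
  then have "exp (l * ln (1 + u)) \<le> 1 + l * u" using u by (simp add: algebra_simps)
  then have "ln (exp (l * ln (1 + u))) \<le> ln (1 + l * u)"
    using l u by (subst ln_le_cancel_iff) (auto intro!: add_pos_nonneg)
  then have "l * ln (1 + u) \<le> ln (1 + l * u)" by simp
  moreover have "l * u = exp (- z')" unfolding l_def u_def by (simp flip: exp_add)
  ultimately show ?thesis using True unfolding ell_def l_def u_def by simp
next
  case False
  have "exp (- \<bar>z' - z\<bar>) * ell z \<le> 1 * ell z"
    using ell_pos[of z] by (intro mult_right_mono) auto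
  also have "\<dots> \<le> ell z'" using False ell_mono[of z' z] by simp
  finally show ?thesis .
qed

lemma inner_x: "data_x g i \<bullet> w = (data_x g i $ 1) * (w $ 1) + (data_x g i $ 2) * (w $ 2)"
  by (simp add: inner_vec_def sum_2)

lemma norm_x:
  assumes "0 < g" "g < 0.1"
  shows "norm (data_x g i) \<le> 1"
proof -
  have g1: "g \<le> 1" using assms by simp
  have gg: "g * g \<le> 1" using mult_le_one[OF g1 _ g1] assms by simp
  have s: "sqrt (1 - g^2) ^ 2 = 1 - g^2" using gg by (intro real_sqrt_pow2) (auto simp: power2_eq_square)
  have "data_x g i \<bullet> data_x g i \<le> 1"
    using s assms gg unfolding inner_x by (auto simp: data_x_def power2_eq_square field_simps)
  then show ?thesis by (simp add: norm_eq_sqrt_inner)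
qed

lemma logloss_ell: "logloss g w = (ell (data_x g 1 \<bullet> w) + ell (data_x g 2 \<bullet> w)) / 2"
  unfolding logloss_def ell_def data_y_def by simp

lemma grad_eq: "logloss_grad g w = (1/2) *\<^sub>R ((- 1 / (1 + exp (data_x g 1 \<bullet> w))) *\<^sub>R data_x g 1
   + (- 1 / (1 + exp (data_x g 2 \<bullet> w))) *\<^sub>R data_x g 2)"
  unfolding logloss_grad_def data_y_def by simp

lemma grad_norm:
  assumes "0 < g" "g < 0.1"
  shows "norm (logloss_grad g w) \<le> logloss g w"
proof -
  define a where "a = - 1 / (1 + exp (data_x g 1 \<bullet> w))"
  define b where "b = - 1 / (1 + exp (data_x g 2 \<bullet> w))"
  have pa: "0 < 1 + exp (data_x g 1 \<bullet> w)" by (simp add: add_pos_pos)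
  have pb: "0 < 1 + exp (data_x g 2 \<bullet> w)" by (simp add: add_pos_pos)
  have a: "\<bar>a\<bar> \<le> ell (data_x g 1 \<bullet> w)" using ell_ge_g pa unfolding a_def by simp
  have b: "\<bar>b\<bar> \<le> ell (data_x g 2 \<bullet> w)" using ell_ge_g pb unfolding b_def by simp
  have "norm (logloss_grad g w) = (1/2) * norm (a *\<^sub>R data_x g 1 + b *\<^sub>R data_x g 2)"
    unfolding grad_eq a_def b_def by simp
  also have "\<dots> \<le> (1/2) * (\<bar>a\<bar> * norm (data_x g 1) + \<bar>b\<bar> * norm (data_x g 2))"
    by (intro mult_left_mono order.trans[OF norm_triangle_ineq]) auto
  also have "\<dots> \<le> (1/2) * (\<bar>a\<bar> * 1 + \<bar>b\<bar> * 1)"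
    using norm_x[OF assms] by (intro mult_left_mono add_mono) (auto intro: mult_left_mono)
  also have "\<dots> \<le> logloss g w" unfolding logloss_ell using a b by simp
  finally show ?thesis .
qed

lemma step_bound:
  assumes "0 < g" "g < 0.1" "0 < eta"
  shows "exp (- eta * logloss g (gd g eta t)) * logloss g (gd g eta t) \<le> logloss g (gd g eta (Suc t))"
proof -
  define w where "w = gd g eta t"
  define G where "G = logloss_grad g w"
  define L where "L = logloss g w"
  have GL: "norm G \<le> L" unfolding G_def L_def by (rule grad_norm[OF assms(1,2)])
  have d: "exp (- eta * L) * ell (data_x g i \<bullet> w) \<le> ell (data_x g i \<bullet> (w - eta *\<^sub>R G))" for i
  proof -
    have "\<bar>data_x g i \<bullet> (w - eta *\<^sub>R G) - data_x g i \<bullet> w\<bar> = eta * \<bar>data_x g i \<bullet> G\<bar>"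
      using assms by (simp add: inner_diff_right abs_mult)
    also have "\<dots> \<le> eta * (norm (data_x g i) * norm G)"
      using assms by (intro mult_left_mono Cauchy_Schwarz_ineq2) auto
    also have "\<dots> \<le> eta * (1 * L)"
      using assms norm_x[OF assms(1,2), of i] GL
      by (intro mult_left_mono mult_mono) auto
    finally have "exp (- eta * L) \<le> exp (- \<bar>data_x g i \<bullet> (w - eta *\<^sub>R G) - data_x g i \<bullet> w\<bar>)"
      by simp
    then have "exp (- eta * L) * ell (data_x g i \<bullet> w) \<le>
       exp (- \<bar>data_x g i \<bullet> (w - eta *\<^sub>R G) - data_x g i \<bullet> w\<bar>) * ell (data_x g i \<bullet> w)"
      using ell_pos by (intro mult_right_mono) (auto intro: less_imp_le)
    also have "\<dots> \<le> ell (data_x g i \<bullet> (w - eta *\<^sub>R G))" by (rule ell_mult)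
    finally show ?thesis .
  qed
  have "exp (- eta * L) * L = (exp (- eta * L) * ell (data_x g 1 \<bullet> w) + exp (- eta * L) * ell (data_x g 2 \<bullet> w)) / 2"
    unfolding L_def logloss_ell by (simp add: algebra_simps)
  also have "\<dots> \<le> (ell (data_x g 1 \<bullet> (w - eta *\<^sub>R G)) + ell (data_x g 2 \<bullet> (w - eta *\<^sub>R G))) / 2"
    by (intro divide_right_mono add_mono d) auto
  also have "\<dots> = logloss g (w - eta *\<^sub>R G)" unfolding logloss_ell ..
  finally have "exp (- eta * L) * L \<le> logloss g (w - eta *\<^sub>R G)" .
  then show ?thesis unfolding L_def w_def G_def by simp
qed

lemma first_step:
  assumes "0 < g" "g < 0.1" "0 < eta"
  shows "eta / 40 \<le> logloss g (gd g eta 1)"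
proof -
  have g1: "g \<le> 1" using assms by simp
  have gg: "g * g \<le> 1" using mult_le_one[OF g1 _ g1] assms by simp
  have s: "sqrt (1 - g*g) * sqrt (1 - g*g) = 1 - g*g" using gg by simp
  have gd1: "gd g eta 1 = (eta/4) *\<^sub>R (data_x g 1 + data_x g 2)"
    by (simp add: grad_eq algebra_simps)
  have i21: "data_x g 2 \<bullet> data_x g 1 = g*g - (1 - g*g)/2"
    unfolding inner_x using s by (simp add: data_x_def power2_eq_square)
  have i22: "data_x g 2 \<bullet> data_x g 2 = g*g + (1 - g*g)/4"
    unfolding inner_x using s by (simp add: data_x_def power2_eq_square)
  have "data_x g 2 \<bullet> gd g eta 1 = eta / 4 * (2 * g^2 - (1 - g^2) / 4)"
    unfolding gd1 inner_scaleR_right inner_add_right i21 i22 by (simp add: algebra_simps power2_eq_square)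
  also have "\<dots> \<le> - eta / 20"
  proof -
    have "g * g \<le> 0.1 * 0.1" using assms by (intro mult_mono) auto
    then have h: "g * g \<le> 1/100" by simp
    have aux: "\<And>x::real. x \<le> 1/100 \<Longrightarrow> 2*x - (1-x)/4 \<le> -1/5" by (simp add: field_simps)
    have "2 * (g*g) - (1 - (g*g)) / 4 \<le> - 1 / 5" using aux[OF h] by simp
    then have "2 * g^2 - (1 - g^2) / 4 \<le> - 1 / 5" unfolding power2_eq_square .
    then have "eta / 4 * (2 * g^2 - (1 - g^2) / 4) \<le> eta / 4 * (- 1 / 5)"
      using assms by (intro mult_left_mono) auto
    then show ?thesis by simp
  qed
  finally have z2: "data_x g 2 \<bullet> gd g eta 1 \<le> - eta / 20" .
  have "eta / 20 \<le> ell (data_x g 2 \<bullet> gd g eta 1)" using ell_ge_neg[of "data_x g 2 \<bullet> gd g eta 1"] z2 by linarith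
  then show ?thesis unfolding logloss_ell using ell_pos[of "data_x g 1 \<bullet> gd g eta 1"] by simp
qed

lemma exp_aux: "exp (x::real) \<le> 1 + x * exp x"
proof -
  have "1 + (- x) \<le> exp (- x)" using exp_ge_add_one_self[of "- x"] by simp
  then have "(1 - x) * exp x \<le> exp (- x) * exp x" by (intro mult_right_mono) auto
  then show ?thesis by (simp add: exp_minus algebra_simps)
qed

lemma logloss0: "logloss g 0 = ln 2"
  unfolding logloss_ell ell_def by simp

theorem mainTheorem3:
  fixes \<gamma> :: real
  assumes "0 < \<gamma>" and "\<gamma> < 0.1"
  shows "\<exists>c0 > 0. \<forall>\<eta> > 0.
           decseq (\<lambda>t. logloss \<gamma> (gd \<gamma> \<eta> t)) \<longrightarrow>
           (\<forall>t \<ge> 1. logloss \<gamma> (gd \<gamma> \<eta> t) \<ge> c0 / real t)"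
proof -
  define K :: real where "K = 40 * exp 40"
  have K: "0 \<le> K" unfolding K_def by simp
  show ?thesis
  proof (intro exI[of _ "1 / (2 + K)"] conjI allI impI)
    show "0 < 1 / (2 + K)" using K by simp
    fix eta :: real and t :: nat
    assume eta: "0 < eta" and dec: "decseq (\<lambda>t. logloss \<gamma> (gd \<gamma> eta t))" and t: "1 \<le> t"
    define L where "L = (\<lambda>t. logloss \<gamma> (gd \<gamma> eta t))"
    have Lpos: "0 < L n" for n unfolding L_def logloss_ell using ell_pos by (simp add: add_pos_pos)
    have ln2: "ln (2::real) \<le> 1" using ln_2_less_1 by simp
    have ln2': "1/2 \<le> ln (2::real)" using ln2_ge_two_thirds by simp
    have Lle: "L n \<le> 1" for n
    proof -
      have "L n \<le> L 0" using dec unfolding L_def decseq_def by (metis gd.simps(1) le0)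
      also have "L 0 = ln 2" unfolding L_def by (simp add: logloss0)
      finally show ?thesis using ln2 by simp
    qed
    have eta40: "eta \<le> 40"
      using first_step[OF assms eta] Lle[of 1] unfolding L_def by simp
    have rec: "1 / L n \<le> 2 + K * n" for n
    proof (induction n)
      case 0
      have "1 / L 0 = 1 / ln 2" unfolding L_def by (simp add: logloss0)
      also have "\<dots> \<le> 2" using ln2' by (simp add: field_simps)
      finally show ?case by simp
    next
      case (Suc n)
      define x where "x = L n"
      have x: "0 < x" "x \<le> 1" unfolding x_def using Lpos Lle by auto
      have st: "exp (- eta * x) * x \<le> L (Suc n)"
        unfolding x_def L_def by (rule step_bound[OF assms eta])
      have "1 / L (Suc n) \<le> 1 / (exp (- eta * x) * x)"
        using x st Lpos[of "Suc n"] by (intro divide_left_mono) auto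
      also have "\<dots> = exp (eta * x) / x" by (simp add: exp_minus field_simps)
      also have "\<dots> \<le> (1 + eta * x * exp (eta * x)) / x"
        using x exp_aux by (intro divide_right_mono) auto
      also have "\<dots> = 1 / x + eta * exp (eta * x)" using x by (simp add: field_simps)
      also have "eta * exp (eta * x) \<le> K"
      proof -
        have "eta * x \<le> 40 * 1" using eta eta40 x by (intro mult_mono) auto
        then have "exp (eta * x) \<le> exp 40" by simp
        then show ?thesis unfolding K_def using eta eta40 by (intro mult_mono) auto
      qed
      finally show ?case using Suc.IH unfolding x_def by (simp add: algebra_simps)
    qed
    have "1 / (2 + K) / real t = 1 / ((2 + K) * t)" by simp
    also have "\<dots> \<le> 1 / (2 + K * t)"
      using t K by (intro divide_left_mono) (auto simp: algebra_simps intro: add_pos_nonneg)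
    also have "\<dots> \<le> 1 / (1 / L t)"
    proof -
      have "0 < 2 + K * t" using K by (simp add: add_pos_nonneg)
      then show ?thesis using rec[of t] Lpos[of t] by (intro divide_left_mono) (auto intro!: divide_pos_pos)
    qed
    also have "\<dots> = L t" by simp
    finally show "1 / (2 + K) / real t \<le> logloss \<gamma> (gd \<gamma> eta t)" unfolding L_def .
  qed
qed

end
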